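(* Let $w>0$, $0<\lambda\le\frac12$ and $1\le E\le\frac{1}{2\lambda}$. Let $x:(0,\infty)\to(0,\infty)$ be differentiable and strictly decreasing with $\frac{x(p)}{p}\le -x'(p)\le E\frac{x(p)}{p}$ for all $p>0$. Define the update $p'=p\big(1+\lambda\min\{1,\frac{x(p)-w}{w}\}\big)$ and the potential $\phi(p)=|x(p)-w|\,p$. Then for every $p>0$, \[ \phi(p)-\phi(p')\ \ge\ w\,|p'-p|, \] where $w|p'-p|=\lambda\phi(p)$ if $x(p)\le 2w$, and $w|p'-p|=\lambda\frac{w}{x(p)-w}\phi(p)$ if $x(p)\ge 2w$. Consequently, if $p_0>0$ and $p_{k+1}=p_k'$ for $k\ge 0$, then for all $k\ge 0$, \[ \phi(p_k)\le\Big(1-\lambda\min\Big\{1,\tfrac{w}{|x(p_0)-w|}\Big\}\Big)^k\phi(p_0). \] *)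

theory Defs
  imports "HOL-Analysis.Analysis"
begin

definition upd :: "(real \<Rightarrow> real) \<Rightarrow> real \<Rightarrow> real \<Rightarrow> real \<Rightarrow> real" where
  "upd x w lam p = p * (1 + lam * min 1 ((x p - w) / w))"

definition phi :: "(real \<Rightarrow> real) \<Rightarrow> real \<Rightarrow> real \<Rightarrow> real" where
  "phi x w p = \<bar>x p - w\<bar> * p"

end

theory Submission
  imports Defs
begin


lemma A1: fixes w m a X :: real
  assumes "w > 0" "0 < m" "m \<le> 1" "0 \<le> a" "a \<le> m/2" "X = w*(1+m)"
  shows "X*(1+(1-m/2)*(1+a)) \<ge> 2*w*(1+a)"
proof -
  have "m*(1-m) \<ge> 0" using assms by simp
  hence h1: "(1+m)*(1-m/2) \<ge> 1" by (simp add: algebra_simps)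
  have h2: "(1+m)*(1-m/2)*(1+a) \<ge> 1*(1+a)" using h1 assms by (intro mult_right_mono) auto
  hence h2: "(1+m)*(1-m/2)*(1+a) \<ge> 1+a" by simp
  define P where "P = (1+m)*(1-m/2)*(1+a)"
  have e: "(1+m)*(1+(1-m/2)*(1+a)) - 2*(1+a) = (1+m) + P - 2*(1+a)" unfolding P_def by (simp add: algebra_simps)
  have "(1+m)*(1+(1-m/2)*(1+a)) - 2*(1+a) \<ge> 0" unfolding e using h2[folded P_def] assms(2-5) by argo
  hence "w*((1+m)*(1+(1-m/2)*(1+a)) - 2*(1+a)) \<ge> 0" using assms by simp
  thus ?thesis using assms by (simp add: algebra_simps)
qed
lemma B1: fixes w t l X :: real
  assumes "w > 0" "0 < t" "t < 1" "0 < l" "l \<le> 1/2" "X = w*(1-t)" "r = 1 - l*t"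
  shows "X*r*r \<le> (2*w*r - X)*(r-t/2)"
proof -
  have "l*(2-3*l) \<ge> 0" using assms by simp
  moreover have "l*(2-3*l) = 2*l - 3*l^2" by (simp add: algebra_simps power2_eq_square)
  moreover have "l^2*(1+t) \<le> l^2*2" using assms by (intro mult_left_mono) auto
  ultimately have "1/2+2*l-l^2 - l^2*(1+t) \<ge> 0" by linarith
  hence "(1-t)*(1/2+2*l-l^2 - l^2*(1+t)) \<ge> 0" using assms by simp
  moreover have "(1-l)*(1-2*l) \<ge> 0" using assms by simp
  moreover have "(3/2-l) - t*(1/2+2*l-l^2) + l^2*t^2 = (1-t)*(1/2+2*l-l^2 - l^2*(1+t)) + (1-l)*(1-2*l)"
    by (simp add: algebra_simps power2_eq_square diff_divide_distrib)
  ultimately have g: "(3/2-l) - t*(1/2+2*l-l^2) + l^2*t^2 \<ge> 0" by linarith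
  have "(2*w*r - X)*(r-t/2) - X*r*r = w*t*((3/2-l) - t*(1/2+2*l-l^2) + l^2*t^2)"
    unfolding assms(6,7) by (simp add: algebra_simps power2_eq_square diff_divide_distrib add_divide_distrib)
  moreover have "w*t*((3/2-l) - t*(1/2+2*l-l^2) + l^2*t^2) \<ge> 0" using g assms by simp
  ultimately show ?thesis by linarith
qed

lemma A2: fixes w a X :: real
  assumes "w > 0" "X \<ge> 2*w" "0 \<le> a" "a \<le> 1/2"
  shows "X*(1+(1-1/2)*(1+a)) \<ge> 2*w*(1+a)"
proof -
  have "X*(1+(1-1/2)*(1+a)) \<ge> (2*w)*(1+(1-1/2)*(1+a))" using assms by (intro mult_right_mono) auto
  moreover have "(2*w)*(1+(1-1/2)*(1+a)) \<ge> 2*w*(1+a)" using assms by (simp add: algebra_simps)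
  ultimately show ?thesis by linarith
qed

locale mkt =
  fixes x :: "real \<Rightarrow> real" and w lam E :: real
  assumes w_pos: "w > 0"
    and lam: "0 < lam" "lam \<le> 1/2"
    and E: "1 \<le> E" "E \<le> 1 / (2 * lam)"
    and x_pos: "\<And>p. p > 0 \<Longrightarrow> x p > 0"
    and x_diff: "\<And>p. p > 0 \<Longrightarrow> x differentiable (at p)"
    and x_decr: "\<And>p q. 0 < p \<Longrightarrow> p < q \<Longrightarrow> x q < x p"
    and x_elast: "\<And>p. p > 0 \<Longrightarrow> x p / p \<le> - deriv x p \<and> - deriv x p \<le> E * x p / p"
begin

lemma dx: "z > 0 \<Longrightarrow> DERIV x z :> deriv x z"
  using x_diff DERIV_deriv_iff_real_differentiable by blast

lemma H1: assumes "0 < a" "a < b" shows "x b * b \<le> x a * a"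
proof -
  have "\<And>z. a \<le> z \<Longrightarrow> z \<le> b \<Longrightarrow> DERIV (\<lambda>q. x q * q) z :> deriv x z * z + 1 * x z"
  proof -
    fix z assume "a \<le> z" "z \<le> b"
    hence "z > 0" using assms by auto
    from DERIV_mult[OF dx[OF this] DERIV_ident] show "DERIV (\<lambda>q. x q * q) z :> deriv x z * z + 1 * x z" .
  qed
  from MVT2[OF assms(2) this] obtain z where z: "a < z" "z < b"
    "x b * b - x a * a = (b - a) * (deriv x z * z + 1 * x z)" by blast
  have "x z / z \<le> - deriv x z" using x_elast[of z] z assms by auto
  hence "x z \<le> - deriv x z * z" using z assms by (simp add: divide_le_eq)
  hence "deriv x z * z + 1 * x z \<le> 0" by simp
  hence "(b - a) * (deriv x z * z + 1 * x z) \<le> 0" using assms by (simp add: mult_nonneg_nonpos)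
  thus ?thesis using z by simp
qed

lemma H2: assumes "0 < a" "a < b" shows "x a - x b \<le> E * x a / a * (b - a)"
proof -
  have "\<And>z. a \<le> z \<Longrightarrow> z \<le> b \<Longrightarrow> DERIV x z :> deriv x z"
    using assms by (intro dx) auto
  from MVT2[OF assms(2) this] obtain z where z: "a < z" "z < b"
    "x b - x a = (b - a) * deriv x z" by blast
  have d: "- deriv x z \<le> E * x z / z" using x_elast[of z] z assms by auto
  have "x z < x a" using x_decr z assms by auto
  moreover have "x z > 0" using x_pos z assms by auto
  ultimately have "x z / z \<le> x a / a" using z assms
    by (simp add: frac_le)
  hence "E * x z / z \<le> E * x a / a" using E mult_left_mono[of "x z / z" "x a / a" E] by simp
  hence "- deriv x z \<le> E * x a / a" using d by linarith
  hence "(b - a) * (- deriv x z) \<le> (b - a) * (E * x a / a)" using assms by (intro mult_left_mono) auto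
  thus ?thesis using z by (simp add: algebra_simps)
qed
lemma Elam: "E*lam \<le> 1/2" using E(2) lam(1) by (simp add: field_simps)

lemma step:
  assumes p: "p > 0"
  shows "upd x w lam p > 0 \<and> phi x w p - phi x w (upd x w lam p) \<ge> w * \<bar>upd x w lam p - p\<bar>
     \<and> (x p < w \<longrightarrow> x (upd x w lam p) \<le> 2*w) \<and> (w \<le> x p \<longrightarrow> x (upd x w lam p) \<le> x p)"
proof -
  define X where "X = x p"
  define m where "m = min 1 ((X - w)/w)"
  define q where "q = upd x w lam p"
  have q: "q = p*(1+lam*m)" unfolding q_def upd_def m_def X_def ..
  have X0: "X > 0" using x_pos p X_def by auto
  have "(X-w)/w > -1" using X0 w_pos by (simp add: field_simps)
  hence m1: "m > -1" "m \<le> 1" unfolding m_def by auto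
  have "lam*m > lam*(-1)" using m1 lam by (intro mult_strict_left_mono) auto
  hence r: "1+lam*m > 0" using lam by linarith
  have qpos: "q > 0" using q p r by simp
  have phi_p: "phi x w p = \<bar>X-w\<bar>*p" unfolding phi_def X_def ..
  have phi_q: "phi x w q = \<bar>x q - w\<bar>*q" unfolding phi_def ..
  have main: "phi x w p - phi x w q \<ge> w * \<bar>q - p\<bar> \<and> (X < w \<longrightarrow> x q \<le> 2*w) \<and> (w \<le> X \<longrightarrow> x q \<le> X)"
  proof -
    consider "X = w" | "X > w" | "X < w" by linarith
    then show ?thesis
    proof cases
      case 1
      hence "m = 0" unfolding m_def by simp
      hence "q = p" using q by simp
      thus ?thesis using 1 X_def by simp
    next
      case 2
      hence mpos: "m > 0" unfolding m_def using w_pos by simp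
      define a where "a = lam*m"
      have "lam*m \<le> lam*1" using m1 lam by (intro mult_left_mono) auto
      hence a0: "0 < a" "a \<le> 1/2" unfolding a_def using mpos lam by (auto, linarith)
      have qp: "q - p = p*a" using q a_def by (simp add: algebra_simps)
      moreover have "p*a > 0" using p a0 by simp
      ultimately have "q > p" by linarith
      have h1: "x q * q \<le> X * p" using H1[OF p \<open>q > p\<close>] X_def by simp
      have xq: "x q < X" using x_decr[OF p \<open>q > p\<close>] X_def by simp
      have h2: "X - x q \<le> E * X / p * (q - p)" using H2[OF p \<open>q > p\<close>] X_def by simp
      also have "\<dots> = E * a * X" using qp p by (simp add: field_simps)
      finally have h2: "X - x q \<le> E * a * X" .
      have "\<bar>q - p\<bar> = q - p" using \<open>q > p\<close> by simp
      have ineq: "(X-w)*p - \<bar>x q - w\<bar>*q \<ge> w*(q-p)"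
      proof (cases "x q \<ge> w")
        case True
        hence "\<bar>x q - w\<bar>*q = x q * q - w*q" by (simp add: algebra_simps)
        thus ?thesis using h1 by (simp add: algebra_simps)
      next
        case False
        hence ab: "\<bar>x q - w\<bar>*q = w*q - x q * q" by (simp add: algebra_simps)
        have "(E*lam)*m \<le> (1/2)*m" using Elam mpos by (intro mult_right_mono) auto
        hence Ea: "E*a \<le> m/2" unfolding a_def by (simp add: mult.assoc)
        have "x q \<ge> X*(1 - E*a)" using h2 by (simp add: algebra_simps)
        moreover have "X*(1 - E*a) \<ge> X*(1-m/2)" using Ea X0 by (intro mult_left_mono) auto
        ultimately have "x q \<ge> X*(1-m/2)" by linarith
        hence "x q * (1+a) \<ge> X*(1-m/2)*(1+a)" using a0 by (intro mult_right_mono) auto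
        hence s1: "X + x q * (1+a) \<ge> X*(1+(1-m/2)*(1+a))" by (simp add: algebra_simps)
        have s2: "X*(1+(1-m/2)*(1+a)) \<ge> 2*w*(1+a)"
        proof (cases "(X - w)/w \<ge> 1")
          case True
          hence "m = 1" unfolding m_def by simp
          moreover have "X \<ge> 2*w" using True w_pos by (simp add: field_simps)
          ultimately show ?thesis using A2[OF w_pos _ _ a0(2)] a0 by simp
        next
          case False
          hence "m = (X-w)/w" unfolding m_def by simp
          hence "X = w*(1+m)" using w_pos by (simp add: field_simps)
          moreover have "a \<le> m/2" unfolding a_def using lam mpos by (simp add: mult_right_mono)
          ultimately show ?thesis using A1[OF w_pos mpos m1(2)] a0 by simp
        qed
        have "(X + x q * (1+a))*p \<ge> (2*w*(1+a))*p" using s1 s2 p by (intro mult_right_mono) auto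
        hence "X*p + x q * q \<ge> 2*w*q" using q a_def by (simp add: algebra_simps)
        thus ?thesis using ab by (simp add: algebra_simps)
      qed
      show ?thesis using ineq phi_p phi_q 2 \<open>\<bar>q - p\<bar> = q - p\<close> xq by simp
    next
      case 3
      define t where "t = (w - X)/w"
      have t: "0 < t" "t < 1" unfolding t_def using 3 X0 w_pos by (auto simp: field_simps)
      have mt: "m = -t" unfolding m_def t_def using 3 w_pos by (simp add: field_simps)
      have Xt: "X = w*(1-t)" unfolding t_def using w_pos by (simp add: field_simps)
      define r where "r = 1 - lam*t"
      have qr: "q = p*r" using q mt r_def by simp
      have "lam*t < lam*1" using lam t by (intro mult_strict_left_mono) auto
      hence lt: "lam*t < 1/2" using lam by linarith
      have lt2: "lam*t \<le> (1/2)*t" using lam t by (intro mult_right_mono) auto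
      have Elt: "(E*lam)*t \<le> (1/2)*t" using Elam t by (intro mult_right_mono) auto
      have lt0: "lam*t > 0" using lam t by simp
      have r0: "0 < r" "r < 1" unfolding r_def using lt lt0 by auto
      have "q < p" using qr r0 p by simp
      have h1: "X * p \<le> x q * q" using H1[OF qpos \<open>q < p\<close>] X_def by simp
      have xq: "x q > X" using x_decr[OF qpos \<open>q < p\<close>] X_def by simp
      have h2: "x q - X \<le> E * x q / q * (p - q)" using H2[OF qpos \<open>q < p\<close>] X_def by simp
      have "\<bar>q - p\<bar> = p - q" using \<open>q < p\<close> by simp
      have ineq: "(w - X)*p - \<bar>x q - w\<bar>*q \<ge> w*(p-q) \<and> x q \<le> 2*w"
      proof (cases "x q \<le> w")
        case True
        hence "\<bar>x q - w\<bar>*q = w*q - x q * q" by (simp add: algebra_simps)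
        thus ?thesis using h1 True w_pos by (simp add: algebra_simps)
      next
        case False
        hence ab: "\<bar>x q - w\<bar>*q = x q * q - w*q" by (simp add: algebra_simps)
        have xq0: "x q > 0" using xq X0 by linarith
        have "(x q - X)*q \<le> (E * x q / q * (p - q))*q" using h2 qpos by (intro mult_right_mono) auto
        also have "\<dots> = E * x q * (p - q)" using qpos by simp
        also have "\<dots> = p * (E*lam*t * x q)" unfolding qr r_def by (simp add: algebra_simps)
        finally have "p * ((x q - X)*r) \<le> p * (E*lam*t * x q)" unfolding qr by (simp add: algebra_simps)
        hence "(x q - X)*r \<le> E*lam*t * x q" using p by simp
        moreover have "E*lam*t * x q \<le> (t/2) * x q" using Elam t xq0
          by (intro mult_right_mono) auto
        ultimately have "x q * (r - t/2) \<le> X * r" by (simp add: algebra_simps)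
        hence "x q * (r - t/2) * r \<le> X * r * r" using r0 by (intro mult_right_mono) auto
        also have "\<dots> \<le> (2*w*r - X)*(r-t/2)" using B1[OF w_pos t lam Xt r_def] .
        finally have "(x q * r) * (r - t/2) \<le> (2*w*r - X)*(r-t/2)" by (simp add: algebra_simps)
        moreover have "r - t/2 > 0" unfolding r_def using lt2 t by linarith
        ultimately have k: "x q * r \<le> 2*w*r - X" by simp
        hence "x q * r < 2 * w * r" using X0 by linarith
        hence "x q < 2*w" using r0 by simp
        moreover have "(x q * r)*p \<le> (2*w*r - X)*p" using k p by (intro mult_right_mono) auto
        ultimately show ?thesis using ab qr by (simp add: algebra_simps)
      qed
      show ?thesis using ineq phi_p phi_q 3 \<open>\<bar>q - p\<bar> = p - q\<close> by simp
    qed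
  qed
  show ?thesis using main qpos unfolding q_def X_def by auto
qed

end



theorem mainTheorem5:
  fixes x :: "real \<Rightarrow> real" and w lam E :: real and ps :: "nat \<Rightarrow> real"
  assumes w_pos: "w > 0"
    and lam: "0 < lam" "lam \<le> 1/2"
    and E: "1 \<le> E" "E \<le> 1 / (2 * lam)"
    and x_pos: "\<And>p. p > 0 \<Longrightarrow> x p > 0"
    and x_diff: "\<And>p. p > 0 \<Longrightarrow> x differentiable (at p)"
    and x_decr: "\<And>p q. 0 < p \<Longrightarrow> p < q \<Longrightarrow> x q < x p"
    and x_elast: "\<And>p. p > 0 \<Longrightarrow> x p / p \<le> - deriv x p \<and> - deriv x p \<le> E * x p / p"
    and p0: "ps 0 > 0"
    and rec: "\<And>k. ps (Suc k) = upd x w lam (ps k)"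
  shows "(\<forall>p>0. phi x w p - phi x w (upd x w lam p) \<ge> w * \<bar>upd x w lam p - p\<bar>
                \<and> (x p \<le> 2 * w \<longrightarrow> w * \<bar>upd x w lam p - p\<bar> = lam * phi x w p)
                \<and> (x p \<ge> 2 * w \<longrightarrow> w * \<bar>upd x w lam p - p\<bar> = lam * (w / (x p - w)) * phi x w p))
         \<and> (\<forall>k. phi x w (ps k) \<le> (1 - lam * min 1 (w / \<bar>x (ps 0) - w\<bar>)) ^ k * phi x w (ps 0))"
  proof -
  interpret mkt x w lam E using assms by unfold_locales
  have P1: "phi x w p - phi x w (upd x w lam p) \<ge> w * \<bar>upd x w lam p - p\<bar>
                \<and> (x p \<le> 2 * w \<longrightarrow> w * \<bar>upd x w lam p - p\<bar> = lam * phi x w p)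
                \<and> (x p \<ge> 2 * w \<longrightarrow> w * \<bar>upd x w lam p - p\<bar> = lam * (w / (x p - w)) * phi x w p)"
    if p: "p > 0" for p
  proof -
    have d: "upd x w lam p - p = p * lam * min 1 ((x p - w)/w)" unfolding upd_def by (simp add: algebra_simps)
    have e1: "x p \<le> 2 * w \<longrightarrow> w * \<bar>upd x w lam p - p\<bar> = lam * phi x w p"
    proof
      assume "x p \<le> 2*w"
      hence "(x p - w)/w \<le> 1" using w_pos by (simp add: field_simps)
      hence "min 1 ((x p - w)/w) = (x p - w)/w" by simp
      hence "w * \<bar>upd x w lam p - p\<bar> = w * \<bar>p * lam * ((x p - w)/w)\<bar>" using d by simp
      also have "\<dots> = w * \<bar>(p*lam/w) * (x p - w)\<bar>" by simp
      also have "\<dots> = w * ((p*lam/w) * \<bar>x p - w\<bar>)" using w_pos p lam by (simp add: abs_mult)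
      also have "\<dots> = lam * (\<bar>x p - w\<bar> * p)" using w_pos by (simp add: field_simps)
      finally show "w * \<bar>upd x w lam p - p\<bar> = lam * phi x w p" unfolding phi_def .
    qed
    have e2: "x p \<ge> 2 * w \<longrightarrow> w * \<bar>upd x w lam p - p\<bar> = lam * (w / (x p - w)) * phi x w p"
    proof
      assume a: "x p \<ge> 2*w"
      hence "(x p - w)/w \<ge> 1" using w_pos by (simp add: field_simps)
      hence "min 1 ((x p - w)/w) = 1" by simp
      hence "w * \<bar>upd x w lam p - p\<bar> = w * p * lam" using d p lam w_pos by (simp add: abs_mult)
      also have "\<dots> = lam * (w / (x p - w)) * (\<bar>x p - w\<bar> * p)" using a w_pos by (simp add: field_simps)
      finally show "w * \<bar>upd x w lam p - p\<bar> = lam * (w / (x p - w)) * phi x w p" unfolding phi_def .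
    qed
    show ?thesis using step[OF p] e1 e2 by blast
  qed
  define c0 where "c0 = min 1 (w / \<bar>x (ps 0) - w\<bar>)"
  have c0: "0 \<le> c0" "c0 \<le> 1" unfolding c0_def using w_pos by auto
  have fac2: "lam * c0 \<le> lam * 1" using c0 lam by (intro mult_left_mono) auto
  have fac: "0 \<le> 1 - lam * c0" "lam * c0 \<le> lam"
    using fac2 lam by linarith+
  have phi0: "p > 0 \<Longrightarrow> phi x w p \<ge> 0" for p unfolding phi_def by simp
  have ind: "ps k > 0 \<and> x (ps k) \<le> max (2*w) (x (ps 0)) \<and> phi x w (ps k) \<le> (1 - lam * c0) ^ k * phi x w (ps 0)" for k
  proof (induction k)
    case 0
    then show ?case using p0 by simp
  next
    case (Suc k)
    define p where "p = ps k"
    have p: "p > 0" and xb: "x p \<le> max (2*w) (x (ps 0))"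
      and ih: "phi x w p \<le> (1 - lam * c0) ^ k * phi x w (ps 0)" using Suc p_def by auto
    have q: "ps (Suc k) = upd x w lam p" using rec p_def by simp
    have S: "upd x w lam p > 0 \<and> phi x w p - phi x w (upd x w lam p) \<ge> w * \<bar>upd x w lam p - p\<bar>
     \<and> (x p < w \<longrightarrow> x (upd x w lam p) \<le> 2*w) \<and> (w \<le> x p \<longrightarrow> x (upd x w lam p) \<le> x p)"
      using step[OF p] .
    have xq: "x (upd x w lam p) \<le> max (2*w) (x (ps 0))"
    proof (cases "x p < w")
      case True thus ?thesis using S by auto
    next
      case False thus ?thesis using S xb by auto
    qed
    have ph: "phi x w (upd x w lam p) \<le> (1 - lam * c0) * phi x w p"
    proof (cases "x p \<le> 2*w")
      case True
      hence "phi x w (upd x w lam p) \<le> phi x w p - lam * phi x w p" using S P1[OF p] by auto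
      moreover have "lam * c0 * phi x w p \<le> lam * phi x w p"
        using fac phi0[OF p] by (intro mult_right_mono) auto
      ultimately show ?thesis by (simp add: algebra_simps)
    next
      case False
      hence X0: "x p \<le> x (ps 0)" "x (ps 0) > 2*w" using xb by auto
      hence ab0: "\<bar>x (ps 0) - w\<bar> = x (ps 0) - w" using w_pos by simp
      have "w / (x (ps 0) - w) \<le> 1" using X0 w_pos by (simp add: field_simps)
      hence c0e: "c0 = w / (x (ps 0) - w)" unfolding c0_def ab0 by (simp add: min_def)
      have "w / (x (ps 0) - w) \<le> w / (x p - w)" using X0 False w_pos
        by (intro divide_left_mono) auto
      hence "lam * c0 \<le> lam * (w / (x p - w))" using c0e lam by (intro mult_left_mono) auto
      hence "lam * c0 * phi x w p \<le> lam * (w / (x p - w)) * phi x w p"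
        using phi0[OF p] by (intro mult_right_mono) auto
      moreover have "phi x w (upd x w lam p) \<le> phi x w p - lam * (w / (x p - w)) * phi x w p"
        using S P1[OF p] False by auto
      ultimately show ?thesis by (simp add: algebra_simps)
    qed
    also have "\<dots> \<le> (1 - lam * c0) * ((1 - lam * c0) ^ k * phi x w (ps 0))"
      using ih fac by (intro mult_left_mono) auto
    finally show ?case using q S xq by simp
  qed
  show ?thesis using P1 ind c0_def by blast
qed

end
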